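(* For every generator $(v_0,v_1,v_2,v_3)$ of $C_3^{h\neq}(V)$ one has $$\nu\big(\widehat\sigma(v_0,v_1,v_2,v_3)\big)=\mu\big(\partial(v_0,v_1,v_2,v_3)\big)\quad\text{in } \mathbb C\wedge_{\mathbb Z}\mathbb C,$$ where $\mu$ is extended linearly. Consequently, $\widehat\sigma$ maps the $3$-cycles of $C_*^{h\neq}(V)_G$ into $\ker\nu$. Given that $\widehat\sigma$ kills boundaries in $\widehat{\mathcal P}(\mathbb C)$, it therefore induces a homomorphism $H_3^{h\neq}(V)\to\widehat{\mathcal B}(\mathbb C)$.
   Context: Let $V=(\mathbb C^2\setminus\{0\})/\pm$, let $G=\mathrm{PSL}(2,\mathbb C)$ act on $V$ on the left by matrix multiplication, and let $h:V\to\mathbb CP^1$ be $h(\pm(\alpha,\beta)^T)=\alpha/\beta$. For $n\ge 0$ let $C_n(V)$ be the free abelian group on $(n+1)$-tuples of elements of $V$, with boundary $\partial(v_0,\dots,v_n)=\sum_{i=0}^n(-1)^i(v_0,\dots,\widehat{v_i},\dots,v_n)$ and the diagonal left $G$-action. Let $C_n^{h\neq}(V)$ be the subcomplex spanned by tuples whose $h(v_i)$ are pairwise distinct. Let $C_n^{h\neq}(V)_G=\mathbb Z\otimes_{\mathbb Z[G]}C_n^{h\neq}(V)$, and let $H_n^{h\neq}(V)$ denote its homology. For $v_i,v_j\in V$ with $h(v_i)\ne h(v_j)$, $\det(v_i,v_j)$ denotes the determinant of the $2\times2$ matrix whose columns are representatives of $v_i,v_j$. It is nonzero and defined up to sign;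 fix the sign by requiring $0\le\arg\det(v_i,v_j)<\pi$. Put $c_{ij}=\mathrm{Log}\det(v_i,v_j)$ (principal branch). This is invariant under $G$. Define $\widehat\sigma(v_0,v_1,v_2,v_3)=(w_0,w_1,w_2)$, where - $w_0=c_{03}+c_{12}-c_{02}-c_{13}$, - $w_1=c_{02}+c_{13}-c_{01}-c_{23}$, - $w_2=c_{01}+c_{23}-c_{03}-c_{12}$. This triple is a combinatorial flattening of the cross ratio $z=[h(v_0):h(v_1):h(v_2):h(v_3)]$, where $[a:b:c:d]=\frac{(a-d)(b-c)}{(b-d)(a-c)}$. It defines a map $C_3^{h\neq}(V)_G\to\widehat{\mathcal P}(\mathbb C)$. Here $\widehat{\mathcal P}(\mathbb C)$ is Neumann's extended pre-Bloch group. It is the free abelian group on combinatorial flattenings $[z;p,q]=(w_0,w_1,w_2)$, where $z\in\mathbb C\setminus\{0,1\}$, $p,q\in\mathbb Z$, $w_0=\mathrm{Log}z+p\pi i$, $w_1=-\mathrm{Log}(1-z)+q\pi i$, and $w_0+w_1+w_2=0$, taken modulo Neumann's lifted five-term relations. The map $\nu:\widehat{\mathcal P}(\mathbb C)\to\mathbb C\wedge_{\mathbb Z}\mathbb C$ is $\nu(w_0,w_1,w_2)=w_0\wedge w_1$, and $\widehat{\mathcal B}(\mathbb C)=\ker\nu$. Define $\mu:C_2^{h\neq}(V)_G\to\mathbb C\wedge_{\mathbb Z}\mathbb C$ by $\mu(v_0,v_1,v_2)=c_{01}\wedge c_{02}-c_{01}\wedge c_{12}+c_{02}\wedge c_{12}$.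 *)

theory Defs
  imports "HOL-Analysis.Analysis"
begin

(* Points of C^2 \ {0}; an element of V = (C^2\{0})/+- is represented by any of
   its two representatives; all notions below are representative-independent
   or are quotiented by the sign flips explicitly (see flip relation). *)
type_synonym vec = "complex \<times> complex"

definition vneg :: "vec \<Rightarrow> vec" where
  "vneg v = (- fst v, - snd v)"

(* CP^1 = C \<union> {\<infinity>}, with None = \<infinity> *)
definition hmap :: "vec \<Rightarrow> complex option" where
  "hmap v = (if snd v = 0 then None else Some (fst v / snd v))"

definition det2 :: "vec \<Rightarrow> vec \<Rightarrow> complex" where
  "det2 v w = fst v * snd w - fst w * snd v"

definition ndet :: "vec \<Rightarrow> vec \<Rightarrow> complex" where
  "ndet v w = (if 0 \<le> Arg (det2 v w) \<and> Arg (det2 v w) < pi then det2 v w else - det2 v w)"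

definition cc :: "vec \<Rightarrow> vec \<Rightarrow> complex" where
  "cc v w = Ln (ndet v w)"

(* generators of C_n^{h\<noteq>}(V): (n+1)-tuples of nonzero vectors with pairwise distinct h *)
definition hgen :: "nat \<Rightarrow> vec list \<Rightarrow> bool" where
  "hgen n t \<longleftrightarrow> length t = Suc n \<and> (\<forall>i<length t. t ! i \<noteq> (0, 0))
      \<and> (\<forall>i<length t. \<forall>j<length t. i \<noteq> j \<longrightarrow> hmap (t ! i) \<noteq> hmap (t ! j))"

(* formal Z-combinations of pairs; a \<wedge> b is the class of wg a b *)
type_synonym wsum = "complex \<times> complex \<Rightarrow> int"

definition wg :: "complex \<Rightarrow> complex \<Rightarrow> wsum" where
  "wg a b = (\<lambda>p. if p = (a, b) then 1 else 0)"

inductive_set wedge_rel :: "wsum set" where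
  wr_zero: "(\<lambda>_. 0) \<in> wedge_rel"
| wr_add: "x \<in> wedge_rel \<Longrightarrow> y \<in> wedge_rel \<Longrightarrow> (\<lambda>p. x p + y p) \<in> wedge_rel"
| wr_neg: "x \<in> wedge_rel \<Longrightarrow> (\<lambda>p. - x p) \<in> wedge_rel"
| wr_lin1: "(\<lambda>p. wg (a + b) c p - wg a c p - wg b c p) \<in> wedge_rel"
| wr_lin2: "(\<lambda>p. wg a (b + c) p - wg a b p - wg a c p) \<in> wedge_rel"
| wr_alt: "wg a a \<in> wedge_rel"

definition wedge_eq :: "wsum \<Rightarrow> wsum \<Rightarrow> bool" where
  "wedge_eq x y \<longleftrightarrow> (\<lambda>p. x p - y p) \<in> wedge_rel"

type_synonym chain = "vec list \<Rightarrow> int"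

definition supp :: "chain \<Rightarrow> vec list set" where
  "supp z = {t. z t \<noteq> 0}"

definition single :: "vec list \<Rightarrow> chain" where
  "single t = (\<lambda>s. if s = t then 1 else 0)"

definition del_nth :: "nat \<Rightarrow> 'a list \<Rightarrow> 'a list" where
  "del_nth i t = take i t @ drop (Suc i) t"

(* boundary, extended linearly (z of finite support) *)
definition bd :: "chain \<Rightarrow> chain" where
  "bd z = (\<lambda>s. \<Sum>t\<in>supp z. \<Sum>i<length t.
              if del_nth i t = s then (-1) ^ i * z t else 0)"

definition mu_tuple :: "vec list \<Rightarrow> wsum" where
  "mu_tuple t = (let c = (\<lambda>i j. cc (t ! i) (t ! j)) in
     (\<lambda>p. wg (c 0 1) (c 0 2) p - wg (c 0 1) (c 1 2) p + wg (c 0 2) (c 1 2) p))"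

definition mu_lin :: "chain \<Rightarrow> wsum" where
  "mu_lin z = (\<lambda>p. \<Sum>s\<in>supp z. z s * mu_tuple s p)"

definition sigma_hat :: "vec list \<Rightarrow> complex \<times> complex \<times> complex" where
  "sigma_hat t = (let c = (\<lambda>i j. cc (t ! i) (t ! j)) in
     (c 0 3 + c 1 2 - c 0 2 - c 1 3,
      c 0 2 + c 1 3 - c 0 1 - c 2 3,
      c 0 1 + c 2 3 - c 0 3 - c 1 2))"

definition nu :: "complex \<times> complex \<times> complex \<Rightarrow> wsum" where
  "nu w = wg (fst w) (fst (snd w))"

(* SL(2,C) matrix (a,b,c,d) = [[a,b],[c,d]]; PSL(2,C) acts on V through it *)
definition act :: "complex \<times> complex \<times> complex \<times> complex \<Rightarrow> vec \<Rightarrow> vec" where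
  "act g v = (case g of (a, b, c, d) \<Rightarrow> (a * fst v + b * snd v, c * fst v + d * snd v))"

definition SL2 :: "(complex \<times> complex \<times> complex \<times> complex) set" where
  "SL2 = {(a, b, c, d). a * d - b * c = 1}"

(* chains over representatives that vanish in C_n^{h\<noteq>}(V)_G: generated by
   sign changes of a single entry (passage to V) and by x - g.x (coinvariants) *)
inductive_set coinv_rel :: "nat \<Rightarrow> chain set" for n :: nat where
  cr_zero: "(\<lambda>_. 0) \<in> coinv_rel n"
| cr_add: "x \<in> coinv_rel n \<Longrightarrow> y \<in> coinv_rel n \<Longrightarrow> (\<lambda>s. x s + y s) \<in> coinv_rel n"
| cr_neg: "x \<in> coinv_rel n \<Longrightarrow> (\<lambda>s. - x s) \<in> coinv_rel n"
| cr_act: "hgen n t \<Longrightarrow> g \<in> SL2 \<Longrightarrow>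
     (\<lambda>s. single t s - single (map (act g) t) s) \<in> coinv_rel n"
| cr_flip: "hgen n t \<Longrightarrow> i < length t \<Longrightarrow>
     (\<lambda>s. single t s - single (t[i := vneg (t ! i)]) s) \<in> coinv_rel n"

end

theory Submission
  imports Defs "HOL-Library.Function_Algebras"
begin

section \<open>The wedge quotient\<close>

lemma wr_0: "(0::wsum) \<in> wedge_rel"
  using wr_zero by (simp add: zero_fun_def)

lemma wr_plus: "x \<in> wedge_rel \<Longrightarrow> y \<in> wedge_rel \<Longrightarrow> x + y \<in> wedge_rel"
  using wr_add[of x y] by (simp add: plus_fun_def)

lemma wr_uminus: "x \<in> wedge_rel \<Longrightarrow> - x \<in> wedge_rel"
  using wr_neg[of x] by (simp add: fun_Compl_def)

lemma wr_minus: "x \<in> wedge_rel \<Longrightarrow> y \<in> wedge_rel \<Longrightarrow> x - y \<in> wedge_rel"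
  using wr_plus[OF _ wr_uminus, of x y] by simp

definition weqv :: "wsum \<Rightarrow> wsum \<Rightarrow> bool" where
  "weqv x y \<longleftrightarrow> x - y \<in> wedge_rel"

lemma equivp_weqv: "equivp weqv"
proof (rule equivpI)
  show "reflp weqv" by (auto simp: reflp_def weqv_def wr_0)
  show "symp weqv" unfolding symp_def weqv_def
    using wr_uminus by (metis minus_diff_eq)
  show "transp weqv" unfolding transp_def weqv_def
  proof (intro allI impI)
    fix x y z :: wsum assume "x - y \<in> wedge_rel" "y - z \<in> wedge_rel"
    then have "(x - y) + (y - z) \<in> wedge_rel" by (rule wr_plus)
    then show "x - z \<in> wedge_rel" by simp
  qed
qed

quotient_type wedge = wsum / weqv
  by (rule equivp_weqv)

instantiation wedge :: ab_group_add
begin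

lift_definition zero_wedge :: wedge is "0::wsum" .

lift_definition plus_wedge :: "wedge \<Rightarrow> wedge \<Rightarrow> wedge" is "(+)"
proof -
  fix x x' y y' :: wsum assume "weqv x x'" "weqv y y'"
  then have "(x - x') + (y - y') \<in> wedge_rel" unfolding weqv_def by (rule wr_plus)
  then show "weqv (x + y) (x' + y')" unfolding weqv_def by (simp add: algebra_simps)
qed

lift_definition uminus_wedge :: "wedge \<Rightarrow> wedge" is "uminus"
proof -
  fix x x' :: wsum assume "weqv x x'"
  then have "- (x - x') \<in> wedge_rel" unfolding weqv_def by (rule wr_uminus)
  then show "weqv (- x) (- x')" unfolding weqv_def by (simp add: algebra_simps)
qed

lift_definition minus_wedge :: "wedge \<Rightarrow> wedge \<Rightarrow> wedge" is "(-)"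
proof -
  fix x x' y y' :: wsum assume "weqv x x'" "weqv y y'"
  then have "(x - x') - (y - y') \<in> wedge_rel" unfolding weqv_def by (rule wr_minus)
  then show "weqv (x - y) (x' - y')" unfolding weqv_def by (simp add: algebra_simps)
qed

instance
  by standard (transfer; simp add: weqv_def wr_0 algebra_simps)+

end

lift_definition W :: "complex \<Rightarrow> complex \<Rightarrow> wedge" is wg .

lemma W_add1: "W (a + b) c = W a c + W b c"
proof transfer
  fix a b c
  have "wg (a + b) c - (wg a c + wg b c) = (\<lambda>p. wg (a + b) c p - wg a c p - wg b c p)"
    by (auto simp: fun_eq_iff)
  then show "weqv (wg (a + b) c) (wg a c + wg b c)"
    unfolding weqv_def using wr_lin1 by metis
qed

lemma W_add2: "W a (b + c) = W a b + W a c"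
proof transfer
  fix a b c
  have "wg a (b + c) - (wg a b + wg a c) = (\<lambda>p. wg a (b + c) p - wg a b p - wg a c p)"
    by (auto simp: fun_eq_iff)
  then show "weqv (wg a (b + c)) (wg a b + wg a c)"
    unfolding weqv_def using wr_lin2 by metis
qed

lemma W_alt: "W a a = 0"
  by transfer (simp add: weqv_def wr_alt)

lemma W_zero1: "W 0 c = 0"
  using W_add1[of 0 0 c] by simp

lemma W_zero2: "W c 0 = 0"
  using W_add2[of c 0 0] by simp

lemma W_neg1: "W (- a) c = - W a c"
  using W_add1[of a "-a" c] W_zero1[of c] by (metis add.right_inverse minus_unique)

lemma W_neg2: "W c (- a) = - W c a"
  using W_add2[of c a "-a"] W_zero2[of c] by (metis add.right_inverse minus_unique)

lemma W_diff1: "W (a - b) c = W a c - W b c"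
  using W_add1[of a "-b" c] W_neg1[of b c] by simp

lemma W_diff2: "W c (a - b) = W c a - W c b"
  using W_add2[of c a "-b"] W_neg2[of c b] by simp

lemma W_swap: "W b a = - W a b"
proof -
  have "W a b + W b a = 0"
  proof -
    have "0 = W (a + b) (a + b)" by (simp add: W_alt)
    also have "\<dots> = W a a + W a b + (W b a + W b b)" by (simp add: W_add1 W_add2 add.assoc)
    also have "\<dots> = W a b + W b a" by (simp add: W_alt)
    finally show ?thesis by simp
  qed
  then show ?thesis by (rule minus_unique[symmetric])
qed

lemma key:
  "W (c + d - b - e) (b + e - a - f) =
     (W d e - W d f + W e f) - (W b c - W b f + W c f) + (W a c - W a e + W c e)
     - (W a b - W a d + W b d)"
  by (simp add: W_add1 W_diff1 W_add2 W_diff2 W_alt W_swap[of b c] W_swap[of b d]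
      W_swap[of a c] W_swap[of a d] W_swap[of a e] W_swap[of a b] W_swap[of b e]
      W_swap[of c e] W_swap[of d e] algebra_simps)


lemma abs_eq_weqv: "abs_wedge x = abs_wedge y \<longleftrightarrow> weqv x y"
  by (simp add: wedge.abs_eq_iff)

lemma abs_plus: "abs_wedge (x + y) = abs_wedge x + abs_wedge y"
  by (simp add: plus_wedge.abs_eq)

lemma abs_minus: "abs_wedge (x - y) = abs_wedge x - abs_wedge y"
  by (simp add: minus_wedge.abs_eq)

lemma abs_wg: "abs_wedge (wg a b) = W a b"
  by (simp add: W.abs_eq)

section \<open>Linearity of mu\<close>

lemma mu_lin_gen:
  assumes "finite S" "supp z \<subseteq> S"
  shows "mu_lin z = (\<lambda>p. \<Sum>s\<in>S. z s * mu_tuple s p)"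
  unfolding mu_lin_def
proof (rule ext, rule sum.mono_neutral_left[OF assms(1) assms(2)])
  fix p show "\<forall>i\<in>S - supp z. z i * mu_tuple i p = 0" by (auto simp: supp_def)
qed

lemma mu_lin_G:
  assumes "finite I"
  shows "mu_lin (\<lambda>s. \<Sum>i\<in>I. if f i = s then a i else 0) = (\<lambda>p. \<Sum>i\<in>I. a i * mu_tuple (f i) p)"
proof -
  have sub: "supp (\<lambda>s. \<Sum>i\<in>I. if f i = s then a i else 0) \<subseteq> f ` I"
  proof
    fix s assume "s \<in> supp (\<lambda>s. \<Sum>i\<in>I. if f i = s then a i else 0)"
    then have "(\<Sum>i\<in>I. if f i = s then a i else 0) \<noteq> 0" by (simp add: supp_def)
    show "s \<in> f ` I"
    proof (rule ccontr)
      assume "s \<notin> f ` I"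
      then have "\<And>i. i \<in> I \<Longrightarrow> (if f i = s then a i else 0) = 0" by auto
      then have "(\<Sum>i\<in>I. if f i = s then a i else 0) = 0" by (rule sum.neutral[OF ballI])
      with \<open>(\<Sum>i\<in>I. if f i = s then a i else 0) \<noteq> 0\<close> show False by simp
    qed
  qed
  show ?thesis
  proof (rule ext)
    fix p
    have "mu_lin (\<lambda>s. \<Sum>i\<in>I. if f i = s then a i else 0) p
        = (\<Sum>s\<in>f ` I. (\<Sum>i\<in>I. if f i = s then a i else 0) * mu_tuple s p)"
      using mu_lin_gen[OF finite_imageI[OF assms] sub] by simp
    also have "\<dots> = (\<Sum>s\<in>f ` I. \<Sum>i\<in>I. if f i = s then a i * mu_tuple (f i) p else 0)"
    proof (rule sum.cong[OF refl])
      fix s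
      show "(\<Sum>i\<in>I. if f i = s then a i else 0) * mu_tuple s p
          = (\<Sum>i\<in>I. if f i = s then a i * mu_tuple (f i) p else 0)"
        unfolding sum_distrib_right by (rule sum.cong) auto
    qed
    also have "\<dots> = (\<Sum>i\<in>I. \<Sum>s\<in>f ` I. if f i = s then a i * mu_tuple (f i) p else 0)"
      by (rule sum.swap)
    also have "\<dots> = (\<Sum>i\<in>I. a i * mu_tuple (f i) p)"
    proof (rule sum.cong[OF refl])
      fix i assume "i \<in> I"
      then show "(\<Sum>s\<in>f ` I. if f i = s then a i * mu_tuple (f i) p else 0) = a i * mu_tuple (f i) p"
        using assms by (subst sum.delta') auto
    qed
    finally show "mu_lin (\<lambda>s. \<Sum>i\<in>I. if f i = s then a i else 0) p = (\<Sum>i\<in>I. a i * mu_tuple (f i) p)" .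
  qed
qed

lemma supp_single: "supp (single t) = {t}"
  by (auto simp: supp_def single_def)

lemma bd_single: "bd (single t) = (\<lambda>s. \<Sum>i<length t. if del_nth i t = s then (-1)^i else 0)"
proof -
  have "single t t = 1" by (simp add: single_def)
  then show ?thesis unfolding bd_def supp_single by (simp cong: if_cong)
qed

lemma mu_bd_single:
  "mu_lin (bd (single t)) = (\<lambda>p. \<Sum>i<length t. (-1)^i * mu_tuple (del_nth i t) p)"
  unfolding bd_single by (rule mu_lin_G) simp


lemma mu_tuple3: "mu_tuple [x, y, z] = wg (cc x y) (cc x z) - wg (cc x y) (cc y z) + wg (cc x z) (cc y z)"
  by (simp add: mu_tuple_def fun_eq_iff)

lemma wedge_eq_abs: "wedge_eq x y \<longleftrightarrow> abs_wedge x = abs_wedge y"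
proof -
  have "(\<lambda>p. x p - y p) = x - y" by (simp add: fun_eq_iff)
  then show ?thesis by (simp add: wedge_eq_def abs_eq_weqv weqv_def)
qed

lemma part1:
  assumes "hgen 3 t"
  shows "wedge_eq (nu (sigma_hat t)) (mu_lin (bd (single t)))"
proof -
  have "length t = 4" using assms by (simp add: hgen_def)
  then have "length t = Suc (Suc (Suc (Suc 0)))" by simp
  then have "\<exists>a b c d. t = [a, b, c, d]" by (auto simp: length_Suc_conv)
  then obtain a b c d where t: "t = [a, b, c, d]" by blast
  have L: "{..<4::nat} = {0, 1, 2, 3}" by auto
  have M: "mu_lin (bd (single t)) = mu_tuple [b, c, d] - mu_tuple [a, c, d] + mu_tuple [a, b, d] - mu_tuple [a, b, c]"
    unfolding mu_bd_single by (simp add: t L del_nth_def fun_eq_iff)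
  have "abs_wedge (mu_lin (bd (single t))) =
     (W (cc b c) (cc b d) - W (cc b c) (cc c d) + W (cc b d) (cc c d))
     - (W (cc a c) (cc a d) - W (cc a c) (cc c d) + W (cc a d) (cc c d))
     + (W (cc a b) (cc a d) - W (cc a b) (cc b d) + W (cc a d) (cc b d))
     - (W (cc a b) (cc a c) - W (cc a b) (cc b c) + W (cc a c) (cc b c))"
    unfolding M mu_tuple3 by (simp add: abs_plus abs_minus abs_wg)
  moreover have "abs_wedge (nu (sigma_hat t)) =
     W (cc a d + cc b c - cc a c - cc b d) (cc a c + cc b d - cc a b - cc c d)"
    by (simp add: nu_def sigma_hat_def t abs_wg)
  ultimately show ?thesis unfolding wedge_eq_abs
    using key[of "cc a d" "cc b c" "cc a c" "cc b d" "cc a b" "cc c d"] by (simp only:)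
qed


section \<open>Invariance of cc\<close>

definition nd :: "complex \<Rightarrow> complex" where
  "nd z = (if 0 \<le> Arg z \<and> Arg z < pi then z else - z)"

lemma C_iff: "(0 \<le> Arg z \<and> Arg z < pi) \<longleftrightarrow> 0 < Im z \<or> (Im z = 0 \<and> 0 \<le> Re z)"
  using Arg_less_0[of z] Arg_eq_pi[of z] Arg_bounded[of z] by (smt (verit))

lemma nd_neg: "nd (- z) = nd z"
proof (cases "z = 0")
  case True then show ?thesis by simp
next
  case False
  then have "Re z \<noteq> 0 \<or> Im z \<noteq> 0" by (simp add: complex_eq_iff)
  then show ?thesis unfolding nd_def C_iff by auto
qed

lemma ndet_nd: "ndet v w = nd (det2 v w)"
  by (simp add: ndet_def nd_def)

lemma cc_vneg1: "cc (vneg v) w = cc v w"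
proof -
  have "det2 (vneg v) w = - det2 v w" by (simp add: det2_def vneg_def)
  then show ?thesis by (simp add: cc_def ndet_nd nd_neg)
qed

lemma cc_vneg2: "cc v (vneg w) = cc v w"
proof -
  have "det2 v (vneg w) = - det2 v w" by (simp add: det2_def vneg_def algebra_simps)
  then show ?thesis by (simp add: cc_def ndet_nd nd_neg)
qed

lemma cc_act: assumes "g \<in> SL2" shows "cc (act g v) (act g w) = cc v w"
proof -
  obtain a b c d where g: "g = (a, b, c, d)" by (cases g) auto
  with assms have 1: "a * d - b * c = 1" by (simp add: SL2_def)
  have "det2 (act g v) (act g w) = (a * d - b * c) * det2 v w"
    by (simp add: g act_def det2_def algebra_simps)
  with 1 show ?thesis by (simp add: cc_def ndet_nd)
qed

lemma len3: "length t = 3 \<Longrightarrow> \<exists>x y z. t = [x, y, z]"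
proof -
  assume "length t = 3"
  then have "length t = Suc (Suc (Suc 0))" by simp
  then show ?thesis by (auto simp: length_Suc_conv)
qed

lemma mu_tuple_act: "hgen 2 t \<Longrightarrow> g \<in> SL2 \<Longrightarrow> mu_tuple (map (act g) t) = mu_tuple t"
proof -
  assume h: "hgen 2 t" and g: "g \<in> SL2"
  from h have "length t = 3" by (simp add: hgen_def)
  then obtain x y z where t: "t = [x, y, z]" using len3 by blast
  show ?thesis by (simp add: t mu_tuple3 cc_act[OF g])
qed

lemma mu_tuple_flip: "hgen 2 t \<Longrightarrow> i < length t \<Longrightarrow> mu_tuple (t[i := vneg (t ! i)]) = mu_tuple t"
proof -
  assume h: "hgen 2 t" and i: "i < length t"
  from h have "length t = 3" by (simp add: hgen_def)
  then obtain x y z where t: "t = [x, y, z]" using len3 by blast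
  from i t have "i = 0 \<or> i = 1 \<or> i = 2" by auto
  then show ?thesis
    by (auto simp: t mu_tuple3 cc_vneg1 cc_vneg2 numeral_2_eq_2)
qed

lemma mu_lin_pair:
  assumes "mu_tuple t = mu_tuple u"
  shows "mu_lin (\<lambda>s. single t s - single u s) = (\<lambda>_. 0)"
proof (cases "t = u")
  case True
  then have "(\<lambda>s. single t s - single u s) = (\<lambda>_. 0)" by simp
  then show ?thesis by (simp add: mu_lin_def supp_def)
next
  case False
  have "supp (\<lambda>s. single t s - single u s) \<subseteq> {t, u}" by (auto simp: supp_def single_def)
  then have "mu_lin (\<lambda>s. single t s - single u s) =
      (\<lambda>p. \<Sum>s\<in>{t, u}. (single t s - single u s) * mu_tuple s p)"
    by (rule mu_lin_gen[rotated]) simp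
  also have "\<dots> = (\<lambda>_. 0)" using False assms by (simp add: single_def fun_eq_iff)
  finally show ?thesis .
qed

lemma coinv_mu:
  "x \<in> coinv_rel 2 \<Longrightarrow> finite (supp x) \<and> mu_lin x = (\<lambda>_. 0)"
proof (induction x rule: coinv_rel.induct)
  case cr_zero
  then show ?case by (simp add: supp_def mu_lin_def)
next
  case (cr_add x y)
  let ?S = "supp x \<union> supp y"
  have fin: "finite ?S" using cr_add by simp
  have sub: "supp (\<lambda>s. x s + y s) \<subseteq> ?S" by (auto simp: supp_def)
  have "mu_lin (\<lambda>s. x s + y s) = (\<lambda>p. \<Sum>s\<in>?S. (x s + y s) * mu_tuple s p)"
    by (rule mu_lin_gen[OF fin sub])
  also have "\<dots> = (\<lambda>p. (\<Sum>s\<in>?S. x s * mu_tuple s p) + (\<Sum>s\<in>?S. y s * mu_tuple s p))"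
    by (simp add: distrib_right sum.distrib)
  also have "\<dots> = (\<lambda>p. mu_lin x p + mu_lin y p)"
    using mu_lin_gen[OF fin, of x] mu_lin_gen[OF fin, of y] by auto
  also have "\<dots> = (\<lambda>_. 0)" using cr_add by simp
  finally show ?case using fin sub finite_subset by blast
next
  case (cr_neg x)
  have "supp (\<lambda>s. - x s) = supp x" by (simp add: supp_def)
  moreover have "mu_lin (\<lambda>s. - x s) = (\<lambda>p. - mu_lin x p)"
    unfolding mu_lin_def supp_def by (simp add: sum_negf)
  ultimately show ?case using cr_neg by simp
next
  case (cr_act t g)
  have "supp (\<lambda>s. single t s - single (map (act g) t) s) \<subseteq> {t, map (act g) t}"
    by (auto simp: supp_def single_def)
  then have "finite (supp (\<lambda>s. single t s - single (map (act g) t) s))"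
    using finite_subset by blast
  moreover have "mu_lin (\<lambda>s. single t s - single (map (act g) t) s) = (\<lambda>_. 0)"
    by (rule mu_lin_pair) (simp add: mu_tuple_act cr_act)
  ultimately show ?case by blast
next
  case (cr_flip t i)
  have "supp (\<lambda>s. single t s - single (t[i := vneg (t ! i)]) s) \<subseteq> {t, t[i := vneg (t ! i)]}"
    by (auto simp: supp_def single_def)
  then have "finite (supp (\<lambda>s. single t s - single (t[i := vneg (t ! i)]) s))"
    using finite_subset by blast
  moreover have "mu_lin (\<lambda>s. single t s - single (t[i := vneg (t ! i)]) s) = (\<lambda>_. 0)"
    by (rule mu_lin_pair) (simp add: mu_tuple_flip cr_flip)
  ultimately show ?case by blast
qed


lemma wr_scale_nat: "x \<in> wedge_rel \<Longrightarrow> (\<lambda>p. int n * x p) \<in> wedge_rel"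
proof (induction n)
  case 0 then show ?case using wr_zero by simp
next
  case (Suc n)
  have "(\<lambda>p. int (Suc n) * x p) = (\<lambda>p. (\<lambda>p. int n * x p) p + x p)"
    by (simp add: algebra_simps)
  then show ?case using wr_add[OF Suc.IH[OF Suc.prems] Suc.prems] by simp
qed

lemma wr_scale: "x \<in> wedge_rel \<Longrightarrow> (\<lambda>p. k * x p) \<in> wedge_rel"
proof (cases "0 \<le> k")
  case True
  assume x: "x \<in> wedge_rel"
  from True obtain n where "k = int n" using zero_le_imp_eq_int by blast
  then show ?thesis using wr_scale_nat[OF x, of n] by simp
next
  case False
  assume x: "x \<in> wedge_rel"
  from False have "0 \<le> - k" by simp
  then obtain n where "- k = int n" using zero_le_imp_eq_int by blast
  then have k: "k = - int n" by simp
  have "(\<lambda>p. k * x p) = (\<lambda>p. - (\<lambda>p. int n * x p) p)"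
    by (simp add: k)
  then show ?thesis using wr_neg[OF wr_scale_nat[OF x, of n]] by simp
qed

lemma wr_sum: "finite S \<Longrightarrow> (\<forall>t\<in>S. f t \<in> wedge_rel) \<Longrightarrow> (\<lambda>p. \<Sum>t\<in>S. f t p) \<in> wedge_rel"
proof (induction S rule: finite_induct)
  case empty then show ?case using wr_zero by simp
next
  case (insert a S)
  then have "(\<lambda>p. f a p + (\<lambda>p. \<Sum>t\<in>S. f t p) p) \<in> wedge_rel"
    by (intro wr_add) auto
  then show ?case using insert by simp
qed

lemma mu_bd:
  assumes fin: "finite (supp z)"
  shows "mu_lin (bd z) = (\<lambda>p. \<Sum>t\<in>supp z. z t * mu_lin (bd (single t)) p)"
proof -
  let ?I = "Sigma (supp z) (\<lambda>t. {..<length t})"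
  have finI: "finite ?I" using fin by auto
  have "bd z = (\<lambda>s. \<Sum>x\<in>?I. if (\<lambda>(t, i). del_nth i t) x = s then (\<lambda>(t, i). (-1)^i * z t) x else 0)"
  proof (rule ext)
    fix s
    have "bd z s = (\<Sum>t\<in>supp z. \<Sum>i<length t. if del_nth i t = s then (- 1) ^ i * z t else 0)"
      by (simp add: bd_def)
    also have "\<dots> = (\<Sum>(t, i)\<in>?I. if del_nth i t = s then (- 1) ^ i * z t else 0)"
      by (rule sum.Sigma) (use fin in auto)
    also have "\<dots> = (\<Sum>x\<in>?I. if (\<lambda>(t, i). del_nth i t) x = s then (\<lambda>(t, i). (-1)^i * z t) x else 0)"
      by (rule sum.cong) auto
    finally show "bd z s = \<dots>" .
  qed
  then have "mu_lin (bd z) = (\<lambda>p. \<Sum>x\<in>?I. (\<lambda>(t, i). (-1)^i * z t) x * mu_tuple ((\<lambda>(t, i). del_nth i t) x) p)"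
    using mu_lin_G[OF finI] by simp
  also have "\<dots> = (\<lambda>p. \<Sum>t\<in>supp z. \<Sum>i<length t. (-1)^i * z t * mu_tuple (del_nth i t) p)"
  proof (rule ext)
    fix p
    have "(\<Sum>x\<in>?I. (\<lambda>(t, i). (-1)^i * z t) x * mu_tuple ((\<lambda>(t, i). del_nth i t) x) p)
        = (\<Sum>(t, i)\<in>?I. (-1)^i * z t * mu_tuple (del_nth i t) p)"
      by (rule sum.cong) auto
    also have "\<dots> = (\<Sum>t\<in>supp z. \<Sum>i<length t. (-1)^i * z t * mu_tuple (del_nth i t) p)"
      by (rule sum.Sigma[symmetric]) (use fin in auto)
    finally show "(\<Sum>x\<in>?I. (\<lambda>(t, i). (-1)^i * z t) x * mu_tuple ((\<lambda>(t, i). del_nth i t) x) p) = \<dots>" .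
  qed
  also have "\<dots> = (\<lambda>p. \<Sum>t\<in>supp z. z t * mu_lin (bd (single t)) p)"
    by (simp add: mu_bd_single sum_distrib_left algebra_simps)
  finally show ?thesis .
qed

theorem mainTheorem1:
  shows "(\<forall>t. hgen 3 t \<longrightarrow> wedge_eq (nu (sigma_hat t)) (mu_lin (bd (single t))))
    \<and> (\<forall>z. finite (supp z) \<and> (\<forall>t\<in>supp z. hgen 3 t) \<and> bd z \<in> coinv_rel 2
          \<longrightarrow> (\<lambda>p. \<Sum>t\<in>supp z. z t * nu (sigma_hat t) p) \<in> wedge_rel)"
proof (intro conjI allI impI)
  fix t assume "hgen 3 t" then show "wedge_eq (nu (sigma_hat t)) (mu_lin (bd (single t)))"
    by (rule part1)
next
  fix z assume A: "finite (supp z) \<and> (\<forall>t\<in>supp z. hgen 3 t) \<and> bd z \<in> coinv_rel 2"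
  then have fin: "finite (supp z)" and h: "\<forall>t\<in>supp z. hgen 3 t" and c: "bd z \<in> coinv_rel 2" by auto
  have "(\<lambda>p. \<Sum>t\<in>supp z. (\<lambda>p. z t * (\<lambda>p. nu (sigma_hat t) p - mu_lin (bd (single t)) p) p) p) \<in> wedge_rel"
  proof (rule wr_sum[OF fin], intro ballI)
    fix t assume "t \<in> supp z"
    then have "wedge_eq (nu (sigma_hat t)) (mu_lin (bd (single t)))" using h part1 by blast
    then show "(\<lambda>p. z t * (\<lambda>p. nu (sigma_hat t) p - mu_lin (bd (single t)) p) p) \<in> wedge_rel"
      unfolding wedge_eq_def by (rule wr_scale)
  qed
  moreover have "mu_lin (bd z) = (\<lambda>_. 0)" using coinv_mu[OF c] by simp
  have "(\<lambda>p. \<Sum>t\<in>supp z. z t * nu (sigma_hat t) p - z t * mu_lin (bd (single t)) p) \<in> wedge_rel"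
    using calculation(1) by (simp add: right_diff_distrib)
  have "(\<lambda>p. \<Sum>t\<in>supp z. z t * mu_lin (bd (single t)) p) = (\<lambda>_. 0)"
    using mu_bd[OF fin] \<open>mu_lin (bd z) = (\<lambda>_. 0)\<close> by simp
  then have Z: "\<And>p. (\<Sum>t\<in>supp z. z t * mu_lin (bd (single t)) p) = 0"
    by (metis (mono_tags, lifting))
  have "(\<lambda>p. \<Sum>t\<in>supp z. z t * nu (sigma_hat t) p)
      = (\<lambda>p. \<Sum>t\<in>supp z. z t * nu (sigma_hat t) p - z t * mu_lin (bd (single t)) p)"
    by (simp add: sum_subtractf Z)
  with \<open>(\<lambda>p. \<Sum>t\<in>supp z. z t * nu (sigma_hat t) p - z t * mu_lin (bd (single t)) p) \<in> wedge_rel\<close>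
  show "(\<lambda>p. \<Sum>t\<in>supp z. z t * nu (sigma_hat t) p) \<in> wedge_rel" by simp
qed

end
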